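(* Let $N\ge1$ be odd, let $A=A(h)$ be the $(N+2)\times(N+2)$ matrix defined in the context and $C=e_2^T=(0,1,0,\dots,0)$. Then for every real value of the parameters $h_\alpha,h_\beta,h_1,\dots,h_{N-1}$ the pair $(A,C)$ is unobservable, i.e. the observability matrix $(C^T,\ (CA)^T,\ \dots,\ (CA^{N+1})^T)^T$ has rank strictly less than $N+2$.
   Context: For an integer $N\ge1$ and real parameters $h=(h_\alpha,h_\beta,h_1,\dots,h_{N-1})$, set $(c_1,c_2,c_3,\dots,c_{N+1})=(h_\alpha,h_\beta,h_1,\dots,h_{N-1})$ and let $A(h)$ be the real $(N+2)\times(N+2)$ tridiagonal matrix with $A_{j,j+1}=c_j$, $A_{j+1,j}=-c_j$ for $j=1,\dots,N+1$ and all other entries zero. $e_j$ denotes the $j$-th standard basis column vector. *)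

theory Defs
  imports "Jordan_Normal_Form.DL_Rank"
begin

text \<open>Indices are 0-based: row/column j (0-based) corresponds to the paper's j+1.
  The coefficient sequence (c_1,...,c_{N+1}) = (h_alpha, h_beta, h_1, ..., h_{N-1})
  is represented 0-based as coef.\<close>

definition coef :: "real \<Rightarrow> real \<Rightarrow> (nat \<Rightarrow> real) \<Rightarrow> nat \<Rightarrow> real" where
  "coef ha hb h j = (if j = 0 then ha else if j = 1 then hb else h (j - 1))"

definition Amat :: "nat \<Rightarrow> real \<Rightarrow> real \<Rightarrow> (nat \<Rightarrow> real) \<Rightarrow> real mat" where
  "Amat N ha hb h = mat (N+2) (N+2) (\<lambda>(i,j).
      if j = i + 1 then coef ha hb h i
      else if i = j + 1 then - coef ha hb h j
      else 0)"

definition Cmat :: "nat \<Rightarrow> real mat" where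
  "Cmat N = mat 1 (N+2) (\<lambda>(i,j). if j = 1 then 1 else 0)"

definition obs_mat :: "real mat \<Rightarrow> real mat \<Rightarrow> nat \<Rightarrow> real mat" where
  "obs_mat A C n = mat n (dim_col A) (\<lambda>(k,j). (C * (A ^\<^sub>m k)) $$ (0, j))"

end

theory Submission
  imports Defs
begin

definition rr :: "nat \<Rightarrow> real \<Rightarrow> real \<Rightarrow> (nat \<Rightarrow> real) \<Rightarrow> nat \<Rightarrow> nat \<Rightarrow> real" where
  "rr N ha hb h k j = (Cmat N * (Amat N ha hb h ^\<^sub>m k)) $$ (0, j)"

lemma A_carr: "Amat N ha hb h \<in> carrier_mat (N+2) (N+2)"
  by (simp add: Amat_def)
lemma C_carr: "Cmat N \<in> carrier_mat 1 (N+2)"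
  by (simp add: Cmat_def)

lemma rr_Suc:
  assumes "j < N+2"
  shows "rr N ha hb h (Suc k) j = (\<Sum>l<N+2. rr N ha hb h k l * Amat N ha hb h $$ (l, j))"
proof -
  let ?A = "Amat N ha hb h" and ?C = "Cmat N"
  have pc: "?A ^\<^sub>m k \<in> carrier_mat (N+2) (N+2)" using A_carr by (rule pow_carrier_mat)
  have "?C * ?A ^\<^sub>m Suc k = ?C * (?A ^\<^sub>m k * ?A)" by simp
  also have "\<dots> = ?C * ?A ^\<^sub>m k * ?A"
    using assoc_mult_mat[OF C_carr pc A_carr] by simp
  finally have e: "?C * ?A ^\<^sub>m Suc k = ?C * ?A ^\<^sub>m k * ?A" .
  have cc: "?C * ?A ^\<^sub>m k \<in> carrier_mat 1 (N+2)" using mult_carrier_mat[OF C_carr pc] .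
  have d1: "dim_row (?C * ?A ^\<^sub>m k) = 1" "dim_col ?A = N+2" "dim_row ?A = N+2"
    using cc by (auto simp: Amat_def)
  have "(?C * ?A ^\<^sub>m k * ?A) $$ (0,j) = row (?C * ?A ^\<^sub>m k) 0 \<bullet> col ?A j"
    using d1 assms by (intro index_mult_mat) auto
  also have "\<dots> = (\<Sum>l \<in> {0..<N+2}. row (?C * ?A ^\<^sub>m k) 0 $ l * col ?A j $ l)"
    unfolding scalar_prod_def using d1 by (simp only: dim_col)
  also have "\<dots> = (\<Sum>l<N+2. rr N ha hb h k l * ?A $$ (l, j))"
    unfolding lessThan_atLeast0[symmetric] rr_def
    by (rule sum.cong) (use d1 cc assms in auto)
  finally show ?thesis unfolding rr_def e .
qed

lemma rr_0: "j < N+2 \<Longrightarrow> rr N ha hb h 0 j = (if j = 1 then 1 else 0)"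
proof -
  assume j: "j < N+2"
  have "Amat N ha hb h ^\<^sub>m 0 = 1\<^sub>m (N+2)" by (simp add: Amat_def)
  then have "Cmat N * Amat N ha hb h ^\<^sub>m 0 = Cmat N" using right_mult_one_mat[OF C_carr] by simp
  then show ?thesis using j by (simp add: rr_def Cmat_def)
qed

lemma rr_par: "j < N+2 \<Longrightarrow> even (k + j) \<Longrightarrow> rr N ha hb h k j = 0"
proof (induction k arbitrary: j)
  case 0 then show ?case by (auto simp: rr_0)
next
  case (Suc k)
  have "rr N ha hb h k l * Amat N ha hb h $$ (l, j) = 0" if "l < N+2" for l
  proof (cases "even (k + l)")
    case True then show ?thesis using Suc.IH that by simp
  next
    case False
    have "Amat N ha hb h $$ (l, j) = 0"
      using Suc.prems that False unfolding Amat_def by auto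
    then show ?thesis by simp
  qed
  then have "(\<Sum>l<N+2. rr N ha hb h k l * Amat N ha hb h $$ (l, j)) = 0"
    by (intro sum.neutral) auto
  then show ?case using rr_Suc[OF Suc.prems(1)] by simp
qed

lemma sum_odd:
  fixes f :: "nat \<Rightarrow> real" and m :: nat
  shows "(\<And>l. even l \<Longrightarrow> l < 2*m+1 \<Longrightarrow> f l = (0::real)) \<Longrightarrow> (\<Sum>l<2*m+1. f l) = (\<Sum>i<m. f (2*i+1))"
proof (induction m)
  case 0 then show ?case by simp
next
  case (Suc m)
  have "(\<Sum>l<2*Suc m+1. f l) = (\<Sum>l<2*m+1. f l) + f (2*m+1) + f (2*m+2)"
    by (simp add: lessThan_Suc)
  then show ?case using Suc by (simp add: lessThan_Suc)
qed

theorem lemma3: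
  fixes N :: nat and ha hb :: real and h :: "nat \<Rightarrow> real"
  assumes "N \<ge> 1" and "odd N"
  shows "vec_space.rank (N+2) (obs_mat (Amat N ha hb h) (Cmat N) (N+2)) < N+2"
proof -
  let ?A = "Amat N ha hb h" and ?n = "N+2"
  define m where "m = (N+1) div 2"
  have nm: "?n = 2*m+1" using assms unfolding m_def by auto
  define r where "r = rr N ha hb h"
  define B where "B = mat ?n ?n (\<lambda>(i,j). if i < m then (if j = 2*i+1 then 1 else 0)
        else if i < 2*m then ?A $$ (2*(i-m)+1, j) else (0::real))"
  define U where "U = mat ?n ?n (\<lambda>(k,i). if even k then (if i < m then r k (2*i+1) else 0)
        else (if m \<le> i \<and> i < 2*m then r (k-1) (2*(i-m)+1) else 0))"
  have O_eq: "obs_mat ?A (Cmat N) ?n = U * B"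
  proof (rule eq_matI)
    fix k j assume k: "k < dim_row (U * B)" and j: "j < dim_col (U * B)"
    then have k: "k < ?n" and j: "j < ?n" by (auto simp: U_def B_def)
    have lhs: "obs_mat ?A (Cmat N) ?n $$ (k, j) = r k j"
      using k j by (simp add: obs_mat_def r_def rr_def Amat_def)
    have prod: "(U * B) $$ (k, j) = (\<Sum>i<?n. U $$ (k,i) * B $$ (i,j))"
      using k j by (simp add: U_def B_def scalar_prod_def lessThan_atLeast0)
    show "obs_mat ?A (Cmat N) ?n $$ (k, j) = (U * B) $$ (k, j)"
    proof (cases "even k")
      case True
      have "(\<Sum>i<?n. U $$ (k,i) * B $$ (i,j)) = (\<Sum>i<m. r k (2*i+1) * (if j = 2*i+1 then 1 else 0))"
      proof -
        have "(\<Sum>i<?n. U $$ (k,i) * B $$ (i,j)) = (\<Sum>i<m. U $$ (k,i) * B $$ (i,j))"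
          by (rule sum.mono_neutral_right) (use k True nm in \<open>auto simp: U_def\<close>)
        also have "\<dots> = (\<Sum>i<m. r k (2*i+1) * (if j = 2*i+1 then 1 else 0))"
          by (rule sum.cong) (use k j True nm in \<open>auto simp: U_def B_def\<close>)
        finally show ?thesis .
      qed
      also have "\<dots> = (\<Sum>l<2*m+1. r k l * (if j = l then 1 else 0))"
        by (rule sum_odd[symmetric]) (use True j nm in \<open>auto simp: r_def intro: rr_par\<close>)
      also have "\<dots> = (\<Sum>l<2*m+1. if l = j then r k j else 0)" by (rule sum.cong) auto
      also have "\<dots> = r k j" using j nm by (subst sum.delta) auto
      finally show ?thesis using lhs prod by simp
    next
      case False
      then obtain k' where kk: "k = Suc k'" and ek: "even k'" by (cases k) auto
      have "(\<Sum>i<?n. U $$ (k,i) * B $$ (i,j)) = (\<Sum>i\<in>{m..<m+m}. U $$ (k,i) * B $$ (i,j))"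
        by (rule sum.mono_neutral_right) (use k False nm in \<open>auto simp: U_def\<close>)
      also have "\<dots> = (\<Sum>i\<in>{0+m..<m+m}. U $$ (k,i) * B $$ (i,j))" by simp
      also have "\<dots> = (\<Sum>i\<in>{0..<m}. U $$ (k,i+m) * B $$ (i+m,j))"
        by (rule sum.shift_bounds_nat_ivl)
      also have "\<dots> = (\<Sum>i<m. r k' (2*i+1) * ?A $$ (2*i+1, j))"
        by (rule sum.cong) (use k j False nm kk in \<open>auto simp: U_def B_def\<close>)
      also have "\<dots> = (\<Sum>l<2*m+1. r k' l * ?A $$ (l, j))"
        by (rule sum_odd[symmetric]) (use ek nm rr_par in \<open>auto simp: r_def\<close>)
      also have "\<dots> = r k j"
      proof -
        have eq: "2*m+1 = N+2" using nm by simp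
        show ?thesis unfolding eq r_def kk by (rule rr_Suc[OF j, symmetric])
      qed
      finally show ?thesis using lhs prod by simp
    qed
  qed (auto simp: obs_mat_def U_def B_def Amat_def)
  have Uc: "U \<in> carrier_mat ?n ?n" and Bc: "B \<in> carrier_mat ?n ?n" by (auto simp: U_def B_def)
  have "det U = 0"
  proof -
    have "U *\<^sub>v unit_vec ?n (2*m) = 0\<^sub>v ?n"
      using nm by (auto simp: U_def mult_mat_vec_def scalar_prod_def unit_vec_def
          intro!: eq_vecI sum.neutral)
    moreover have "unit_vec ?n (2*m) \<noteq> (0\<^sub>v ?n :: real vec)"
    proof
      assume "unit_vec ?n (2*m) = (0\<^sub>v ?n :: real vec)"
      then have "(unit_vec ?n (2*m) :: real vec) $ (2*m) = (0\<^sub>v ?n :: real vec) $ (2*m)" by simp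
      then show False using nm by simp
    qed
    ultimately show ?thesis using det_0_iff_vec_prod_zero_field[OF Uc] by (meson unit_vec_carrier)
  qed
  then have "det (U * B) = 0" using det_mult[OF Uc Bc] by simp
  moreover have "U * B \<in> carrier_mat ?n ?n" using Uc Bc by auto
  ultimately show ?thesis unfolding O_eq by (rule vec_space.det_zero_low_rank[rotated])
qed

end
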